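(* Let $N\ge 1$, let $a_1,\dots,a_N>0$ and $T_1,\dots,T_N\ge 0$. For $P_{\mathrm{tot}}>0$ let $J^*(P_{\mathrm{tot}};T_1,\dots,T_N)$ denote the minimum of $\sum_{i=1}^N(\log_2(1+a_iP_i)-T_i)^2$ over all $P_1,\dots,P_N\ge 0$ with $\sum_i P_i\le P_{\mathrm{tot}}$, and let $\bar P_i=(2^{T_i}-1)/a_i$. Then $J^*$ is nonincreasing in $P_{\mathrm{tot}}$, equals $0$ at $P_{\mathrm{tot}}=\sum_i\bar P_i$ (when this sum is positive) and for all $P_{\mathrm{tot}}\ge\sum_i\bar P_i$. Moreover, for fixed $P_{\mathrm{tot}}$, $J^*$ is nondecreasing in each target $T_i$ (over $T_i\ge 0$, the other data fixed). *)

theory Defs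
  imports Complex_Main
begin

definition Jobj :: "nat \<Rightarrow> (nat \<Rightarrow> real) \<Rightarrow> (nat \<Rightarrow> real) \<Rightarrow> (nat \<Rightarrow> real) \<Rightarrow> real" where
  "Jobj N a T p = (\<Sum>i=1..N. (log 2 (1 + a i * p i) - T i)^2)"

text \<open>Optimal value J*(Ptot; T): infimum (= minimum, attained by compactness) of the
  objective over the feasible set.\<close>
definition Jstar :: "nat \<Rightarrow> (nat \<Rightarrow> real) \<Rightarrow> (nat \<Rightarrow> real) \<Rightarrow> real \<Rightarrow> real" where
  "Jstar N a T Ptot = Inf {Jobj N a T p | p. (\<forall>i\<in>{1..N}. 0 \<le> p i) \<and> (\<Sum>i=1..N. p i) \<le> Ptot}"

definition Pbar :: "(nat \<Rightarrow> real) \<Rightarrow> (nat \<Rightarrow> real) \<Rightarrow> nat \<Rightarrow> real" where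
  "Pbar a T i = (2 powr T i - 1) / a i"

end

theory Submission
  imports Defs
begin

lemma Jobj_nonneg: "0 \<le> Jobj N a T p"
  unfolding Jobj_def by (intro sum_nonneg) auto

lemma bdd_J: "bdd_below {Jobj N a T p | p. (\<forall>i\<in>{1..N}. 0 \<le> p i) \<and> (\<Sum>i=1..N. p i) \<le> P}"
  by (rule bdd_belowI[of _ 0]) (auto simp: Jobj_nonneg)

lemma ne_J: "0 \<le> P \<Longrightarrow> {Jobj N a T p | p. (\<forall>i\<in>{1..N}. 0 \<le> p i) \<and> (\<Sum>i=1..N. p i) \<le> P} \<noteq> {}"
  by (auto intro!: exI[of _ "\<lambda>_. 0"])

lemma Jstar_nonneg: "0 \<le> P \<Longrightarrow> 0 \<le> Jstar N a T P"
  unfolding Jstar_def by (rule cInf_greatest[OF ne_J]) (auto simp: Jobj_nonneg)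

lemma Jstar_mono: "0 \<le> P \<Longrightarrow> P \<le> Q \<Longrightarrow> Jstar N a T Q \<le> Jstar N a T P"
  unfolding Jstar_def
  by (rule cInf_superset_mono[OF ne_J bdd_J]) auto

lemma Jstar_zero:
  assumes a: "\<forall>i\<in>{1..N}. a i > 0" and T: "\<forall>i\<in>{1..N}. T i \<ge> 0"
    and P: "(\<Sum>i=1..N. Pbar a T i) \<le> P"
  shows "Jstar N a T P = 0"
proof -
  have nn: "\<forall>i\<in>{1..N}. 0 \<le> Pbar a T i"
    using a T by (auto simp: Pbar_def ge_one_powr_ge_zero intro!: divide_nonneg_pos)
  have "Jobj N a T (Pbar a T) = 0"
    unfolding Jobj_def
  proof (intro sum.neutral ballI)
    fix i assume i: "i \<in> {1..N}"
    have "1 + a i * Pbar a T i = 2 powr T i" using a i by (fastforce simp add: Pbar_def)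
    then show "(log 2 (1 + a i * Pbar a T i) - T i)^2 = 0" by simp
  qed
  then have "Jstar N a T P \<le> 0"
    unfolding Jstar_def using nn P by (intro cInf_lower[OF _ bdd_J]) (auto intro!: exI[of _ "Pbar a T"])
  moreover have "0 \<le> P" using P sum_nonneg[of "{1..N}" "Pbar a T"] nn by force
  ultimately show ?thesis using Jstar_nonneg by (meson antisym)
qed

lemma key:
  assumes a: "a i > 0" and i: "i \<in> {1..N}" and st: "0 \<le> s" "s \<le> t"
    and p: "\<forall>j\<in>{1..N}. 0 \<le> p j" "(\<Sum>j=1..N. p j) \<le> P"
  shows "\<exists>q. (\<forall>j\<in>{1..N}. 0 \<le> q j) \<and> (\<Sum>j=1..N. q j) \<le> P \<and>
     Jobj N a (T(i:=s)) q \<le> Jobj N a (T(i:=t)) p"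
proof (cases "log 2 (1 + a i * p i) \<le> s")
  case True
  define x where "x = log 2 (1 + a i * p i)"
  have "(x - s)^2 \<le> (x - t)^2"
  proof -
    have "(x - t)^2 - (x - s)^2 = (s - t) * (2*x - s - t)" by (simp add: power2_eq_square algebra_simps)
    also have "\<dots> \<ge> 0" using True st unfolding x_def by (intro mult_nonpos_nonpos) auto
    finally show ?thesis by simp
  qed
  then have "Jobj N a (T(i:=s)) p \<le> Jobj N a (T(i:=t)) p"
    unfolding Jobj_def x_def by (intro sum_mono) auto
  then show ?thesis using p by blast
next
  case False
  define q where "q = p(i := (2 powr s - 1) / a i)"
  have pos: "0 < 1 + a i * p i" using p(1) i a by (simp add: add_pos_nonneg)
  have "2 powr s < 1 + a i * p i"
    using False pos by (simp add: less_log_iff not_le)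
  then have qi: "q i \<le> p i" using a by (simp add: q_def divide_le_eq algebra_simps)
  have qnn: "\<forall>j\<in>{1..N}. 0 \<le> q j" using p(1) st a by (auto simp: q_def ge_one_powr_ge_zero intro!: divide_nonneg_pos)
  have "(\<Sum>j=1..N. q j) \<le> (\<Sum>j=1..N. p j)"
    by (intro sum_mono) (use qi in \<open>auto simp: q_def\<close>)
  moreover have "Jobj N a (T(i:=s)) q \<le> Jobj N a (T(i:=t)) p"
    unfolding Jobj_def
  proof (intro sum_mono)
    fix j assume "j \<in> {1..N}"
    show "(log 2 (1 + a j * q j) - (T(i := s)) j)\<^sup>2 \<le> (log 2 (1 + a j * p j) - (T(i := t)) j)\<^sup>2"
    proof (cases "j = i")
      case True
      have "1 + a i * q i = 2 powr s" using a by (simp add: q_def)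
      then show ?thesis using True by simp
    qed (simp add: q_def)
  qed
  ultimately show ?thesis using qnn p(2) by force
qed

theorem corollary1:
  fixes N :: nat and a T :: "nat \<Rightarrow> real"
  assumes "N \<ge> 1"
    and "\<forall>i\<in>{1..N}. a i > 0"
    and "\<forall>i\<in>{1..N}. T i \<ge> 0"
  shows "(\<forall>P Q. 0 < P \<and> P \<le> Q \<longrightarrow> Jstar N a T Q \<le> Jstar N a T P)
    \<and> ((\<Sum>i=1..N. Pbar a T i) > 0 \<longrightarrow> Jstar N a T (\<Sum>i=1..N. Pbar a T i) = 0)
    \<and> (\<forall>P. 0 < P \<and> (\<Sum>i=1..N. Pbar a T i) \<le> P \<longrightarrow> Jstar N a T P = 0)
    \<and> (\<forall>P > 0. \<forall>i\<in>{1..N}. \<forall>s t. 0 \<le> s \<and> s \<le> t \<longrightarrow>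
          Jstar N a (T(i := s)) P \<le> Jstar N a (T(i := t)) P)"
proof (intro conjI allI impI ballI)
  fix P Q :: real assume "0 < P \<and> P \<le> Q"
  then show "Jstar N a T Q \<le> Jstar N a T P" by (intro Jstar_mono) auto
next
  show "Jstar N a T (\<Sum>i=1..N. Pbar a T i) = 0"
    using assms by (intro Jstar_zero) auto
next
  fix P :: real assume "0 < P \<and> (\<Sum>i=1..N. Pbar a T i) \<le> P"
  then show "Jstar N a T P = 0" using assms by (intro Jstar_zero) auto
next
  fix P s t :: real and i assume P: "P > 0" and i: "i \<in> {1..N}" and st: "0 \<le> s \<and> s \<le> t"
  show "Jstar N a (T(i := s)) P \<le> Jstar N a (T(i := t)) P"
    unfolding Jstar_def
  proof (rule cInf_mono[OF ne_J bdd_J])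
    show "0 \<le> P" using P by simp
  next
    fix b assume "b \<in> {Jobj N a (T(i := t)) p |p. (\<forall>i\<in>{1..N}. 0 \<le> p i) \<and> sum p {1..N} \<le> P}"
    then obtain p where p: "\<forall>j\<in>{1..N}. 0 \<le> p j" "sum p {1..N} \<le> P" and b: "b = Jobj N a (T(i := t)) p"
      by blast
    from key[of a i N s t p P T] assms(2) i st p obtain q where
      "(\<forall>j\<in>{1..N}. 0 \<le> q j) \<and> (\<Sum>j=1..N. q j) \<le> P \<and> Jobj N a (T(i:=s)) q \<le> Jobj N a (T(i:=t)) p"
      by auto
    then show "\<exists>a'\<in>{Jobj N a (T(i := s)) p |p. (\<forall>i\<in>{1..N}. 0 \<le> p i) \<and> sum p {1..N} \<le> P}. a' \<le> b"
      using b by blast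
  qed
qed

end
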